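(* Let $A$ be a non-negative $d\times d$ matrix with $\rho(A)>1$. If $X$ is a local minimum of problem (P), then $X\le A$ entrywise and $\rho(X)=1$.
   Context: $\rho(\cdot)$ denotes spectral radius and $\|\cdot\|$ the Frobenius norm $\|X\|=\sqrt{\sum_{i,j}x_{ij}^2}$. Problem (P) for a non-negative square matrix $A$ is: minimize $\|X-A\|$ subject to $X\ge 0$ (entrywise) and $\rho(X)\le1$. A local minimum of (P) is a feasible $X$ for which there is a neighbourhood $U$ of $X$ with $\|Y-A\|\ge\|X-A\|$ for all feasible $Y\in U$. *)

theory Defs
  imports "Jordan_Normal_Form.Spectral_Radius"
begin

definition frob_norm :: "real mat \<Rightarrow> real" where
  "frob_norm X = sqrt (\<Sum>i<dim_row X. \<Sum>j<dim_col X. (X $$ (i,j))^2)"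

definition nonneg_mat :: "real mat \<Rightarrow> bool" where
  "nonneg_mat X \<longleftrightarrow> (\<forall>i<dim_row X. \<forall>j<dim_col X. X $$ (i,j) \<ge> 0)"

definition rho :: "real mat \<Rightarrow> real" where
  "rho X = spectral_radius (map_mat complex_of_real X)"

definition feasible_P :: "nat \<Rightarrow> real mat \<Rightarrow> bool" where
  "feasible_P d X \<longleftrightarrow> X \<in> carrier_mat d d \<and> nonneg_mat X \<and> rho X \<le> 1"

definition local_min_P :: "nat \<Rightarrow> real mat \<Rightarrow> real mat \<Rightarrow> bool" where
  "local_min_P d A X \<longleftrightarrow> feasible_P d X \<and>
     (\<exists>e>0. \<forall>Y. feasible_P d Y \<and> frob_norm (Y - X) < e \<longrightarrow> frob_norm (X - A) \<le> frob_norm (Y - A))"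

end

theory Submission
  imports Defs
begin

lemma frob_carrier: "M \<in> carrier_mat d d \<Longrightarrow>
  frob_norm M = sqrt (\<Sum>p\<in>{..<d}\<times>{..<d}. (M $$ p)^2)"
  unfolding frob_norm_def by (simp add: sum.cartesian_product)

lemma frob_scale:
  assumes M: "M \<in> carrier_mat d d" and N: "N \<in> carrier_mat d d"
    and e: "\<And>a b. a < d \<Longrightarrow> b < d \<Longrightarrow> M $$ (a,b) = c * N $$ (a,b)"
  shows "frob_norm M = \<bar>c\<bar> * frob_norm N"
proof -
  have "(\<Sum>p\<in>{..<d}\<times>{..<d}. (M $$ p)^2) = (\<Sum>p\<in>{..<d}\<times>{..<d}. c^2 * (N $$ p)^2)"
    by (rule sum.cong, auto simp: e power_mult_distrib)
  also have "\<dots> = c^2 * (\<Sum>p\<in>{..<d}\<times>{..<d}. (N $$ p)^2)" by (simp add: sum_distrib_left)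
  finally show ?thesis unfolding frob_carrier[OF M] frob_carrier[OF N]
    by (simp add: real_sqrt_mult)
qed

lemma pow_entry_Suc:
  assumes X: "X \<in> carrier_mat d d" and i: "i < d" and j: "j < d"
  shows "(X ^\<^sub>m Suc k) $$ (i,j) = (\<Sum>l<d. (X ^\<^sub>m k) $$ (i,l) * X $$ (l,j))"
  using X i j by (simp add: scalar_prod_def atLeast0LessThan)

lemma pow_mono:
  assumes X: "X \<in> carrier_mat d d" and Y: "Y \<in> carrier_mat d d"
    and le: "\<And>a b. a < d \<Longrightarrow> b < d \<Longrightarrow> 0 \<le> Y $$ (a,b) \<and> Y $$ (a,b) \<le> (X $$ (a,b) :: real)"
  shows "i < d \<Longrightarrow> j < d \<Longrightarrow> 0 \<le> (Y ^\<^sub>m k) $$ (i,j) \<and> (Y ^\<^sub>m k) $$ (i,j) \<le> (X ^\<^sub>m k) $$ (i,j)"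
proof (induction k arbitrary: i j)
  case 0
  then show ?case using X Y by simp
next
  case (Suc k)
  have "(\<Sum>l<d. (Y ^\<^sub>m k) $$ (i,l) * Y $$ (l,j)) \<le> (\<Sum>l<d. (X ^\<^sub>m k) $$ (i,l) * X $$ (l,j))"
    apply (rule sum_mono, rule mult_mono)
    using Suc le by (force intro: order_trans)+
  moreover have "0 \<le> (\<Sum>l<d. (Y ^\<^sub>m k) $$ (i,l) * Y $$ (l,j))"
    by (rule sum_nonneg, insert Suc le, auto)
  ultimately show ?case using pow_entry_Suc[OF X Suc.prems] pow_entry_Suc[OF Y Suc.prems] by simp
qed

lemma map_pow: "X \<in> carrier_mat d d \<Longrightarrow>
   map_mat complex_of_real (X ^\<^sub>m k) = (map_mat complex_of_real X) ^\<^sub>m k"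
  using of_real_hom.mat_hom_pow by auto

lemma rho_nonneg: "X \<in> carrier_mat d d \<Longrightarrow> d > 0 \<Longrightarrow> rho X \<ge> 0"
  unfolding rho_def
  using spectral_radius_mem_max(1)[of "map_mat complex_of_real X" d] by auto

lemma ev_bound:
  assumes Y: "Y \<in> carrier_mat d d" and d: "d > 0"
    and b: "\<And>i j. i < d \<Longrightarrow> j < d \<Longrightarrow> \<bar>(Y ^\<^sub>m k) $$ (i,j)\<bar> \<le> b"
  shows "rho Y ^ k \<le> d * b"
proof -
  define M where "M = map_mat complex_of_real Y"
  have M: "M \<in> carrier_mat d d" using Y unfolding M_def by auto
  from spectral_radius_mem_max(1)[OF M d] obtain lam where
    sp: "lam \<in> spectrum M" and r: "rho Y = norm lam" unfolding rho_def M_def[symmetric] by auto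
  from sp obtain v where ev: "eigenvector M v lam" unfolding spectrum_def eigenvalue_def by auto
  have v: "v \<in> carrier_vec d" "v \<noteq> 0\<^sub>v d" and "M *\<^sub>v v = lam \<cdot>\<^sub>v v" using ev M unfolding eigenvector_def by auto
  have pw: "M ^\<^sub>m k *\<^sub>v v = lam ^ k \<cdot>\<^sub>v v" by (rule eigenvector_pow[OF M ev])
  have Mk: "M ^\<^sub>m k = map_mat complex_of_real (Y ^\<^sub>m k)" unfolding M_def using map_pow[OF Y] by simp
  define m where "m = Max ((\<lambda>j. norm (v $ j)) ` {..<d})"
  have fin: "finite ((\<lambda>j. norm (v $ j)) ` {..<d})" "(\<lambda>j. norm (v $ j)) ` {..<d} \<noteq> {}" using d by auto
  obtain i0 where i0: "i0 < d" "norm (v $ i0) = m" using Max_in[OF fin] unfolding m_def by auto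
  have mj: "\<And>j. j < d \<Longrightarrow> norm (v $ j) \<le> m" unfolding m_def using fin by auto
  obtain j1 where j1: "j1 < d" "v $ j1 \<noteq> 0" using v by (auto simp: vec_eq_iff)
  have b0: "0 \<le> b" using b[OF i0(1) i0(1)] by linarith
  have mpos: "m > 0" using mj[OF j1(1)] j1(2) by (meson less_le_trans zero_less_norm_iff)
  have "norm ((M ^\<^sub>m k *\<^sub>v v) $ i0) = norm lam ^ k * m" using pw i0 v by (simp add: norm_mult norm_power)
  moreover have "(M ^\<^sub>m k *\<^sub>v v) $ i0 = (\<Sum>j<d. complex_of_real ((Y ^\<^sub>m k) $$ (i0,j)) * v $ j)"
    unfolding Mk using i0 v Y by (simp add: scalar_prod_def atLeast0LessThan)
  moreover have "norm (\<Sum>j<d. complex_of_real ((Y ^\<^sub>m k) $$ (i0,j)) * v $ j) \<le> (\<Sum>j<d. b * m)"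
  proof -
    have "norm (\<Sum>j<d. complex_of_real ((Y ^\<^sub>m k) $$ (i0,j)) * v $ j) \<le> (\<Sum>j<d. norm (complex_of_real ((Y ^\<^sub>m k) $$ (i0,j)) * v $ j))"
      by (rule norm_sum)
    also have "\<dots> \<le> (\<Sum>j<d. b * m)"
      by (rule sum_mono, simp add: norm_mult, rule mult_mono, insert b i0 mj b0, auto)
    finally show ?thesis .
  qed
  ultimately have "norm lam ^ k * m \<le> d * b * m" by simp
  with mpos r show ?thesis by simp
qed

lemma rho_scale:
  assumes X: "X \<in> carrier_mat d d" and d: "d > 0" and c: "c > 0"
  shows "rho (c \<cdot>\<^sub>m X) \<le> c * rho X"
proof -
  define M where "M = map_mat complex_of_real X"
  have M: "M \<in> carrier_mat d d" using X unfolding M_def by auto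
  have id: "map_mat complex_of_real (c \<cdot>\<^sub>m X) = complex_of_real c \<cdot>\<^sub>m M"
    unfolding M_def by (rule eq_matI, auto)
  have cM: "complex_of_real c \<cdot>\<^sub>m M \<in> carrier_mat d d" using M by auto
  from spectral_radius_mem_max(1)[OF cM d] obtain mu where
    sp: "mu \<in> spectrum (complex_of_real c \<cdot>\<^sub>m M)" and r: "rho (c \<cdot>\<^sub>m X) = norm mu"
    unfolding rho_def id by auto
  from sp obtain v where ev: "eigenvector (complex_of_real c \<cdot>\<^sub>m M) v mu" unfolding spectrum_def eigenvalue_def by auto
  have v: "v \<in> carrier_vec d" "v \<noteq> 0\<^sub>v d" and e: "(complex_of_real c \<cdot>\<^sub>m M) *\<^sub>v v = mu \<cdot>\<^sub>v v"
    using ev M unfolding eigenvector_def by auto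
  have "M *\<^sub>v v = (mu / complex_of_real c) \<cdot>\<^sub>v v"
  proof (rule eq_vecI)
    fix i assume i: "i < dim_vec ((mu / complex_of_real c) \<cdot>\<^sub>v v)"
    have "((complex_of_real c \<cdot>\<^sub>m M) *\<^sub>v v) $ i = (mu \<cdot>\<^sub>v v) $ i" using e by simp
    hence "complex_of_real c * (M *\<^sub>v v) $ i = mu * v $ i"
      using i M v by (simp add: scalar_prod_def sum_distrib_left mult.assoc)
    thus "(M *\<^sub>v v) $ i = ((mu / complex_of_real c) \<cdot>\<^sub>v v) $ i"
      using i c by (simp add: field_simps)
  qed (use M v in auto)
  hence "eigenvector M v (mu / complex_of_real c)" using v M unfolding eigenvector_def by auto
  hence "mu / complex_of_real c \<in> spectrum M" unfolding spectrum_def eigenvalue_def by auto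
  hence "norm (mu / complex_of_real c) \<le> rho X"
    using spectral_radius_mem_max(2)[OF M d] unfolding rho_def M_def[symmetric] by auto
  hence "norm mu / c \<le> rho X" using c by (simp add: norm_divide)
  thus ?thesis using r c by (simp add: field_simps)
qed

lemma smult_pow: "(X :: real mat) \<in> carrier_mat d d \<Longrightarrow> (a \<cdot>\<^sub>m X) ^\<^sub>m k = (a ^ k) \<cdot>\<^sub>m (X ^\<^sub>m k)"
proof (induction k)
  case 0 thus ?case by (auto intro!: eq_matI)
next
  case (Suc k)
  have "(a \<cdot>\<^sub>m X) ^\<^sub>m Suc k = ((a ^ k) \<cdot>\<^sub>m (X ^\<^sub>m k)) * (a \<cdot>\<^sub>m X)" using Suc by simp
  also have "\<dots> = (a ^ Suc k) \<cdot>\<^sub>m (X ^\<^sub>m Suc k)"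
    using Suc.prems by (intro eq_matI) (auto simp: scalar_prod_def sum_distrib_left mult_ac intro!: sum.cong)
  finally show ?case .
qed

lemma geom_bound:
  assumes X: "X \<in> carrier_mat d d" and d: "d > 0" and r: "rho X < r" "r > 0"
  shows "\<exists>c. \<forall>k i j. i < d \<longrightarrow> j < d \<longrightarrow> \<bar>(X ^\<^sub>m k) $$ (i,j)\<bar> \<le> c * r ^ k"
proof -
  define M where "M = (1/r) \<cdot>\<^sub>m X"
  have Mc: "M \<in> carrier_mat d d" using X unfolding M_def by auto
  have "rho M \<le> (1/r) * rho X" unfolding M_def by (rule rho_scale[OF X d], use r in auto)
  also have "\<dots> < 1" using r by (simp add: field_simps)
  finally have "spectral_radius (map_mat complex_of_real M) < 1" unfolding rho_def .
  from spectral_radius_jnf_norm_bound_less_1_upper_triangular[OF _ this] Mc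
  obtain c where c: "\<And>k. norm_bound (map_mat complex_of_real M ^\<^sub>m k) c" by auto
  show ?thesis
  proof (intro exI allI impI)
    fix k i j assume i: "i < d" and j: "j < d"
    have "norm ((map_mat complex_of_real M ^\<^sub>m k) $$ (i,j)) \<le> c"
      using c[of k] i j Mc unfolding norm_bound_def by auto
    hence "\<bar>(M ^\<^sub>m k) $$ (i,j)\<bar> \<le> c" unfolding map_pow[OF Mc, symmetric] using i j Mc by simp
    hence "\<bar>(1/r)^k * (X ^\<^sub>m k) $$ (i,j)\<bar> \<le> c" unfolding M_def smult_pow[OF X] using i j X by simp
    hence "(1/r)^k * \<bar>(X ^\<^sub>m k) $$ (i,j)\<bar> \<le> c" using r by (simp add: abs_mult)
    thus "\<bar>(X ^\<^sub>m k) $$ (i,j)\<bar> \<le> c * r ^ k" using r by (simp add: field_simps power_divide)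
  qed
qed

lemma rho_mono1:
  assumes X: "X \<in> carrier_mat d d" and Y: "Y \<in> carrier_mat d d" and d: "d > 0"
    and le: "\<And>a b. a < d \<Longrightarrow> b < d \<Longrightarrow> 0 \<le> Y $$ (a,b) \<and> Y $$ (a,b) \<le> X $$ (a,b)"
    and rX: "rho X \<le> 1"
  shows "rho Y \<le> 1"
proof (rule ccontr)
  assume "\<not> rho Y \<le> 1"
  hence gt: "rho Y > 1" by simp
  define r where "r = (1 + rho Y) / 2"
  have r: "rho X < r" "r > 0" "r < rho Y" using gt rX unfolding r_def by auto
  from geom_bound[OF X d r(1,2)] obtain c where
    c: "\<And>k i j. i < d \<Longrightarrow> j < d \<Longrightarrow> \<bar>(X ^\<^sub>m k) $$ (i,j)\<bar> \<le> c * r ^ k" by blast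
  have bnd: "rho Y ^ k \<le> d * (c * r ^ k)" for k
  proof (rule ev_bound[OF Y d])
    fix i j assume ij: "i < d" "j < d"
    from pow_mono[OF X Y le ij, of k] c[OF ij, of k]
    show "\<bar>(Y ^\<^sub>m k) $$ (i,j)\<bar> \<le> c * r ^ k" by linarith
  qed
  have q: "rho Y / r > 1" using r by simp
  from real_arch_pow[OF q, of "d * c"] obtain n where n: "d * c < (rho Y / r) ^ n" by auto
  hence "d * c * r ^ n < (rho Y / r) ^ n * r ^ n" using r by simp
  also have "\<dots> = rho Y ^ n" using r by (simp add: power_divide)
  finally show False using bnd[of n] by (simp add: mult.assoc)
qed

lemma pow_cont:
  fixes P :: "real \<Rightarrow> real mat"
  assumes P: "\<And>t. P t \<in> carrier_mat d d"
    and cont: "\<And>a b. a < d \<Longrightarrow> b < d \<Longrightarrow> ((\<lambda>t. P t $$ (a,b)) \<longlongrightarrow> P 0 $$ (a,b)) (at 0)"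
  shows "i < d \<Longrightarrow> j < d \<Longrightarrow> ((\<lambda>t. (P t ^\<^sub>m k) $$ (i,j)) \<longlongrightarrow> (P 0 ^\<^sub>m k) $$ (i,j)) (at 0)"
proof (induction k arbitrary: i j)
  case 0
  have "dim_row (P t) = d" for t using P[of t] by auto
  then show ?case using 0 by simp
next
  case (Suc k)
  have "((\<lambda>t. (\<Sum>l<d. (P t ^\<^sub>m k) $$ (i,l) * P t $$ (l,j))) \<longlongrightarrow>
      (\<Sum>l<d. (P 0 ^\<^sub>m k) $$ (i,l) * P 0 $$ (l,j))) (at 0)"
    by (intro tendsto_sum tendsto_mult, insert Suc cont, auto)
  thus ?case using pow_entry_Suc[OF P Suc.prems] by simp
qed

theorem lemma3:
  fixes A X :: "real mat" and d :: nat
  assumes "A \<in> carrier_mat d d" and "nonneg_mat A" and "rho A > 1"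
    and "local_min_P d A X"
  shows "(\<forall>i<d. \<forall>j<d. X $$ (i,j) \<le> A $$ (i,j)) \<and> rho X = 1"
proof -
  note Ac = assms(1)
  from assms(4) obtain e where X: "X \<in> carrier_mat d d" and nnX: "nonneg_mat X" and rX: "rho X \<le> 1"
    and e: "e > 0"
    and min: "\<And>Y. feasible_P d Y \<Longrightarrow> frob_norm (Y - X) < e \<Longrightarrow> frob_norm (X - A) \<le> frob_norm (Y - A)"
    unfolding local_min_P_def feasible_P_def by blast
  have nA: "\<And>i j. i < d \<Longrightarrow> j < d \<Longrightarrow> 0 \<le> A $$ (i,j)" using assms(2) Ac unfolding nonneg_mat_def by auto
  have nX: "\<And>i j. i < d \<Longrightarrow> j < d \<Longrightarrow> 0 \<le> X $$ (i,j)" using nnX X unfolding nonneg_mat_def by auto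
  have XA: "X \<noteq> A" using rX assms(3) by auto
  have d: "d > 0"
  proof (rule ccontr)
    assume "\<not> d > 0"
    hence "X = A" using X Ac by (intro eq_matI) auto
    with XA show False by simp
  qed
  have part1: "\<forall>i<d. \<forall>j<d. X $$ (i,j) \<le> A $$ (i,j)"
  proof (rule ccontr)
    assume "\<not> ?thesis"
    then obtain i0 j0 where i0: "i0 < d" and j0: "j0 < d" and gt: "A $$ (i0,j0) < X $$ (i0,j0)"
      by force
    define s where "s = min (X $$ (i0,j0) - A $$ (i0,j0)) (e/2)"
    have s: "s > 0" "s \<le> X $$ (i0,j0) - A $$ (i0,j0)" "s < e" using gt e unfolding s_def by auto
    define Y where "Y = mat d d (\<lambda>(a,b). if a = i0 \<and> b = j0 then X $$ (a,b) - s else X $$ (a,b))"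
    have Yc: "Y \<in> carrier_mat d d" unfolding Y_def by auto
    have Yle: "\<And>a b. a < d \<Longrightarrow> b < d \<Longrightarrow> 0 \<le> Y $$ (a,b) \<and> Y $$ (a,b) \<le> X $$ (a,b)"
      unfolding Y_def using nX nA[OF i0 j0] s by auto
    have rY: "rho Y \<le> 1" by (rule rho_mono1[OF X Yc d Yle rX])
    have feas: "feasible_P d Y" unfolding feasible_P_def nonneg_mat_def using Yc Yle rY by auto
    have "(\<Sum>p\<in>{..<d}\<times>{..<d}. ((Y - X) $$ p)^2) = (\<Sum>p\<in>{..<d}\<times>{..<d}. if p = (i0,j0) then s^2 else 0)"
      using carrier_matD[OF X] by (intro sum.cong) (auto simp: Y_def split: if_splits)
    also have "\<dots> = s^2" using i0 j0 by simp
    moreover have "Y - X \<in> carrier_mat d d" using Yc X by auto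
    ultimately have "frob_norm (Y - X) = s" using frob_carrier[of "Y - X" d] s by simp
    hence le1: "frob_norm (X - A) \<le> frob_norm (Y - A)" using min[OF feas] s by simp
    have lt: "(\<Sum>p\<in>{..<d}\<times>{..<d}. ((Y - A) $$ p)^2) < (\<Sum>p\<in>{..<d}\<times>{..<d}. ((X - A) $$ p)^2)"
    proof (rule sum_strict_mono_ex1)
      show "\<forall>p\<in>{..<d}\<times>{..<d}. ((Y - A) $$ p)^2 \<le> ((X - A) $$ p)^2"
      proof
        fix p assume p: "p \<in> {..<d}\<times>{..<d}"
        obtain a b where ab: "p = (a,b)" by force
        show "((Y - A) $$ p)^2 \<le> ((X - A) $$ p)^2"
        proof (cases "a = i0 \<and> b = j0")
          case True
          have "(X $$ (i0,j0) - s - A $$ (i0,j0))^2 \<le> (X $$ (i0,j0) - A $$ (i0,j0))^2"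
            using s by (intro power_mono) auto
          thus ?thesis using True ab p Ac Yc unfolding Y_def by auto
        qed (use ab p Ac Yc in \<open>auto simp: Y_def\<close>)
      qed
      have "(X $$ (i0,j0) - s - A $$ (i0,j0))^2 < (X $$ (i0,j0) - A $$ (i0,j0))^2"
        using s by (intro power_strict_mono) auto
      thus "\<exists>p\<in>{..<d}\<times>{..<d}. ((Y - A) $$ p)^2 < ((X - A) $$ p)^2"
        using i0 j0 Ac Yc by (intro bexI[of _ "(i0,j0)"]) (auto simp: Y_def)
    qed simp
    have "Y - A \<in> carrier_mat d d" "X - A \<in> carrier_mat d d" using Yc X Ac by auto
    hence "frob_norm (Y - A) < frob_norm (X - A)"
      using frob_carrier[of "Y - A" d] frob_carrier[of "X - A" d] lt by simp
    with le1 show False by simp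
  qed
  have part2: "rho X = 1"
  proof (rule ccontr)
    assume "rho X \<noteq> 1"
    hence rl: "rho X < 1" using rX by simp
    have r0: "rho X \<ge> 0" by (rule rho_nonneg[OF X d])
    define r where "r = (rho X + 1) / 2"
    have r: "rho X < r" "r > 0" "r < 1" using rl r0 unfolding r_def by auto
    from geom_bound[OF X d r(1,2)] obtain c where
      c: "\<And>k i j. i < d \<Longrightarrow> j < d \<Longrightarrow> \<bar>(X ^\<^sub>m k) $$ (i,j)\<bar> \<le> c * r ^ k" by blast
    have c0: "c \<ge> 0" using c[OF d d, of 0] by simp
    define eps where "eps = 1 / (2 * real d)"
    have eps: "eps > 0" "real d * eps = 1/2" using d unfolding eps_def by auto
    obtain k where k: "r ^ k < 1 / (2 * real d * (c + 1))"
      using real_arch_pow_inv[of "1 / (2 * real d * (c + 1))" r] r d c0 by auto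
    have "real d * (c + 1) * r ^ k < 1/2"
    proof -
      have pos: "2 * real d * (c + 1) > 0" using d c0 by auto
      from k have "r ^ k * (2 * real d * (c + 1)) < 1" using pos by (simp add: field_simps)
      thus ?thesis by (simp add: field_simps)
    qed
    moreover have "real d * c * r ^ k \<le> real d * (c + 1) * r ^ k" using r d by (intro mult_right_mono) auto
    ultimately have dc: "real d * (c * r ^ k) < 1/2" by (simp add: mult.assoc)
    define P where "P = (\<lambda>t::real. mat d d (\<lambda>(a,b). X $$ (a,b) + t * (A $$ (a,b) - X $$ (a,b))))"
    have Pc: "\<And>t. P t \<in> carrier_mat d d" unfolding P_def by auto
    have P0: "P 0 = X" unfolding P_def using X by (intro eq_matI) auto
    have cont: "((\<lambda>t. P t $$ (a,b)) \<longlongrightarrow> P 0 $$ (a,b)) (at 0)" if "a < d" "b < d" for a b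
    proof -
      have "((\<lambda>t::real. X $$ (a,b) + t * (A $$ (a,b) - X $$ (a,b))) \<longlongrightarrow> X $$ (a,b) + 0 * (A $$ (a,b) - X $$ (a,b))) (at 0)"
        by (intro tendsto_intros)
      thus ?thesis using that unfolding P_def by simp
    qed
    have ev: "\<forall>\<^sub>F t in at 0. \<forall>p\<in>{..<d}\<times>{..<d}. dist ((P t ^\<^sub>m k) $$ p) ((X ^\<^sub>m k) $$ p) < eps"
    proof (rule eventually_ball_finite)
      show "\<forall>p\<in>{..<d}\<times>{..<d}. \<forall>\<^sub>F t in at 0. dist ((P t ^\<^sub>m k) $$ p) ((X ^\<^sub>m k) $$ p) < eps"
      proof
        fix p assume "p \<in> {..<d}\<times>{..<d}"
        then obtain i j where p: "p = (i,j)" "i < d" "j < d" by auto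
        from pow_cont[OF Pc cont p(2,3), of k] have "((\<lambda>t. (P t ^\<^sub>m k) $$ (i,j)) \<longlongrightarrow> (X ^\<^sub>m k) $$ (i,j)) (at 0)"
          unfolding P0 by auto
        from tendstoD[OF this eps(1)] show "\<forall>\<^sub>F t in at 0. dist ((P t ^\<^sub>m k) $$ p) ((X ^\<^sub>m k) $$ p) < eps"
          unfolding p by simp
      qed
    qed simp
    then obtain del where del: "del > 0"
      and delP: "\<And>t. t \<noteq> 0 \<Longrightarrow> dist t 0 < del \<Longrightarrow> \<forall>p\<in>{..<d}\<times>{..<d}. dist ((P t ^\<^sub>m k) $$ p) ((X ^\<^sub>m k) $$ p) < eps"
      unfolding eventually_at by auto
    define F where "F = frob_norm (A - X)"
    have F0: "F \<ge> 0" unfolding F_def frob_norm_def by (simp add: sum_nonneg)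
    define t where "t = min (del/2) (min (1/2) (e / (2 * (F + 1))))"
    have t1: "t > 0" using del e F0 unfolding t_def by auto
    have t2: "t \<le> del/2" "t \<le> 1/2" "t \<le> e / (2 * (F + 1))" unfolding t_def by linarith+
    have t: "t > 0" "t < del" "t \<le> 1/2" "t \<le> e / (2 * (F + 1))" using t1 t2 del by auto
    have tF: "t * F < e"
    proof -
      have "t * F \<le> e / (2 * (F + 1)) * F" using t F0 by (intro mult_right_mono) auto
      also have "\<dots> < e" using e F0 by (simp add: field_simps) (metis add_nonneg_pos mult_nonneg_nonneg less_eq_real_def mult_pos_pos zero_less_numeral)
      finally show ?thesis .
    qed
    define Y where "Y = P t"
    have Yc: "Y \<in> carrier_mat d d" unfolding Y_def by (rule Pc)
    have Yent: "\<And>a b. a < d \<Longrightarrow> b < d \<Longrightarrow> Y $$ (a,b) = X $$ (a,b) + t * (A $$ (a,b) - X $$ (a,b))"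
      unfolding Y_def P_def by auto
    have Ynn: "0 \<le> Y $$ (a,b)" if "a < d" "b < d" for a b
    proof -
      have "0 \<le> (1 - t) * X $$ (a,b) + t * A $$ (a,b)"
        using nX[OF that] nA[OF that] t by (intro add_nonneg_nonneg mult_nonneg_nonneg) auto
      thus ?thesis using Yent[OF that] by (simp add: algebra_simps)
    qed
    have bnd: "\<bar>(Y ^\<^sub>m k) $$ (i,j)\<bar> \<le> c * r ^ k + eps" if "i < d" "j < d" for i j
    proof -
      have "dist ((Y ^\<^sub>m k) $$ (i,j)) ((X ^\<^sub>m k) $$ (i,j)) < eps"
        using delP[of t] t that unfolding Y_def by auto
      thus ?thesis using c[OF that, of k] unfolding dist_real_def by linarith
    qed
    have "rho Y ^ k \<le> real d * (c * r ^ k + eps)" by (rule ev_bound[OF Yc d bnd])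
    also have "\<dots> < 1" using dc eps by (simp add: distrib_left)
    finally have rYk: "rho Y ^ k < 1" .
    have rY: "rho Y \<le> 1"
    proof (rule ccontr)
      assume "\<not> rho Y \<le> 1"
      hence "1 \<le> rho Y ^ k" by (intro one_le_power) auto
      with rYk show False by simp
    qed
    have feas: "feasible_P d Y" unfolding feasible_P_def nonneg_mat_def using Yc Ynn rY by auto
    have "frob_norm (Y - X) = \<bar>t\<bar> * F" unfolding F_def
      by (rule frob_scale) (use Yc X Ac Yent in \<open>auto simp: algebra_simps\<close>)
    hence "frob_norm (Y - X) < e" using t tF by simp
    from min[OF feas this] have le1: "frob_norm (X - A) \<le> frob_norm (Y - A)" .
    have "frob_norm (Y - A) = \<bar>1 - t\<bar> * frob_norm (X - A)"
      by (rule frob_scale) (use Yc X Ac Yent in \<open>auto simp: algebra_simps\<close>)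
    hence eq2: "frob_norm (Y - A) = (1 - t) * frob_norm (X - A)" using t by simp
    obtain a b where ab: "a < d" "b < d" "X $$ (a,b) \<noteq> A $$ (a,b)"
    proof -
      have "\<not> (\<forall>a<d. \<forall>b<d. X $$ (a,b) = A $$ (a,b))"
      proof
        assume "\<forall>a<d. \<forall>b<d. X $$ (a,b) = A $$ (a,b)"
        hence "X = A" using X Ac by (intro eq_matI) auto
        with XA show False by simp
      qed
      thus ?thesis using that by blast
    qed
    have "0 < ((X - A) $$ (a,b))^2" using ab X Ac by simp
    also have "\<dots> \<le> (\<Sum>p\<in>{..<d}\<times>{..<d}. ((X - A) $$ p)^2)"
      by (rule member_le_sum) (use ab in auto)
    finally have sp: "0 < (\<Sum>p\<in>{..<d}\<times>{..<d}. ((X - A) $$ p)^2)" .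
    have "X - A \<in> carrier_mat d d" using X Ac by auto
    hence "frob_norm (X - A) > 0" using frob_carrier[of "X - A" d] sp by simp
    hence "0 < t * frob_norm (X - A)" using t by simp
    with le1 eq2 show False by (simp add: algebra_simps)
  qed
  show ?thesis using part1 part2 by simp
qed

end
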